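(* Let $G=(V,E)$ be a graph with a partition $(V_1,V_2)$ of $V$ such that $G[V_1]$ and $G[V_2]$ are $P_5$-free, and let $k$ be an integer. Suppose that: $k\ge 1$; $G$ contains a $P_5$; every vertex of $G$ lies on some $P_5$ in $G$; every $P_5$ in $G$ contains at least $4$ vertices of $V_2$; and there is no vertex $v\in V_2$ that is isolated in $G[V_2]$ and for which there is a path $(v,w,x,y,z)$ in $G$ with $w\in V_1$. Let $v\in V_2$ be a vertex adjacent to at least two vertices of $V_1$, and let $C_v$ be the connected component of $G[V_2]$ containing $v$. Then every vertex $w\in V_1$ adjacent to $v$ satisfies $N(w)\subseteq V(C_v)$.
   Context: Graphs are finite, simple and undirected. A $P_5$ is a path on $5$ vertices (as a not necessarily induced subgraph), written as the sequence of its vertices; a graph is $P_5$-free if it contains no $P_5$. $G[X]$ denotes the subgraph induced by $X$; $N(w)$ is the set of neighbours of $w$ in $G$. *)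

theory Defs
  imports Main
begin

definition simple_graph :: "'a set \<Rightarrow> ('a \<Rightarrow> 'a \<Rightarrow> bool) \<Rightarrow> bool" where
  "simple_graph V E \<longleftrightarrow> finite V \<and> (\<forall>x y. E x y \<longrightarrow> x \<in> V \<and> y \<in> V)
     \<and> (\<forall>x y. E x y \<longrightarrow> E y x) \<and> (\<forall>x. \<not> E x x)"

text \<open>A (not necessarily induced) path in G[X], given as the sequence of its vertices.\<close>
definition is_path_in :: "('a \<Rightarrow> 'a \<Rightarrow> bool) \<Rightarrow> 'a set \<Rightarrow> 'a list \<Rightarrow> bool" where
  "is_path_in E X xs \<longleftrightarrow> distinct xs \<and> set xs \<subseteq> X
     \<and> (\<forall>i. Suc i < length xs \<longrightarrow> E (xs ! i) (xs ! Suc i))"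

definition is_P5_in :: "('a \<Rightarrow> 'a \<Rightarrow> bool) \<Rightarrow> 'a set \<Rightarrow> 'a list \<Rightarrow> bool" where
  "is_P5_in E X xs \<longleftrightarrow> length xs = 5 \<and> is_path_in E X xs"

definition P5_free :: "('a \<Rightarrow> 'a \<Rightarrow> bool) \<Rightarrow> 'a set \<Rightarrow> bool" where
  "P5_free E X \<longleftrightarrow> \<not> (\<exists>xs. is_P5_in E X xs)"

definition nbhd :: "('a \<Rightarrow> 'a \<Rightarrow> bool) \<Rightarrow> 'a \<Rightarrow> 'a set" where
  "nbhd E w = {u. E w u}"

definition component :: "('a \<Rightarrow> 'a \<Rightarrow> bool) \<Rightarrow> 'a set \<Rightarrow> 'a \<Rightarrow> 'a set" where
  "component E X v = {u. (v, u) \<in> {(a, b). a \<in> X \<and> b \<in> X \<and> E a b}\<^sup>* }"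

end

theory Submission
  imports Defs
begin

lemma two_out:
  assumes "distinct xs" "x \<in> set xs" "y \<in> set xs" "x \<noteq> y" "x \<notin> V2" "y \<notin> V2"
  shows "card (set xs \<inter> V2) + 2 \<le> length xs"
proof -
  have "set xs \<inter> V2 \<subseteq> set xs - {x,y}" using assms by auto
  hence "card (set xs \<inter> V2) \<le> card (set xs - {x,y})" by (intro card_mono) auto
  also have "\<dots> = length xs - 2" using assms by (simp add: distinct_card card_Diff_subset)
  finally have "card (set xs \<inter> V2) \<le> length xs - 2" .
  moreover have "2 \<le> length xs"
  proof -
    have "{x,y} \<subseteq> set xs" using assms by auto
    hence "card {x,y} \<le> card (set xs)" by (intro card_mono) auto
    thus ?thesis using assms by (simp add: distinct_card)
  qed
  ultimately show ?thesis by linarith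
qed

lemma p5_intro:
  assumes "distinct [a,b,c,d,e]" "set [a,b,c,d,e] \<subseteq> V"
    "E a b" "E b c" "E c d" "E d e"
  shows "is_P5_in E V [a,b,c,d,e]"
  using assms unfolding is_P5_in_def is_path_in_def
  by (auto simp: less_Suc_eq numeral_eq_Suc)

lemma bad:
  assumes H: "\<forall>xs. is_P5_in E V xs \<longrightarrow> card (set xs \<inter> V2) \<ge> 4"
    and D: "V1 \<inter> V2 = {}"
    and "distinct [a,b,c,d,e]" "set [a,b,c,d,e] \<subseteq> V"
    "E a b" "E b c" "E c d" "E d e"
    "x \<in> set [a,b,c,d,e]" "y \<in> set [a,b,c,d,e]" "x \<noteq> y" "x \<in> V1" "y \<in> V1"
  shows False
proof -
  have "is_P5_in E V [a,b,c,d,e]" using assms(3-8) by (rule p5_intro)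
  hence "card (set [a,b,c,d,e] \<inter> V2) \<ge> 4" using H by blast
  moreover have "card (set [a,b,c,d,e] \<inter> V2) + 2 \<le> length [a,b,c,d,e]"
    using assms D by (intro two_out) auto
  ultimately show False by simp
qed

lemma p5_list:
  assumes "is_P5_in E V xs"
  obtains a b c d e where "xs = [a,b,c,d,e]" "distinct [a,b,c,d,e]" "set [a,b,c,d,e] \<subseteq> V"
    "E a b" "E b c" "E c d" "E d e"
proof -
  have l: "length xs = 5" using assms by (simp add: is_P5_in_def)
  have xs: "xs = [xs!0, xs!1, xs!2, xs!3, xs!4]"
    using l by (simp add: list_eq_iff_nth_eq less_Suc_eq numeral_eq_Suc nth_Cons')
  have p: "is_path_in E V xs" using assms by (simp add: is_P5_in_def)
  have "E (xs!0) (xs!1)" "E (xs!1) (xs!2)" "E (xs!2) (xs!3)" "E (xs!3) (xs!4)"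
    using p l unfolding is_path_in_def
    by (simp_all add: numeral_eq_Suc)
  then show ?thesis using that xs p unfolding is_path_in_def by metis
qed

theorem lemma5:
  fixes V V1 V2 :: "'a set" and E :: "'a \<Rightarrow> 'a \<Rightarrow> bool" and k :: int and v w :: 'a
  assumes "simple_graph V E"
    and "V1 \<union> V2 = V" and "V1 \<inter> V2 = {}"
    and "P5_free E V1" and "P5_free E V2"
    and "k \<ge> 1"
    and "\<exists>xs. is_P5_in E V xs"
    and "\<forall>x\<in>V. \<exists>xs. is_P5_in E V xs \<and> x \<in> set xs"
    and "\<forall>xs. is_P5_in E V xs \<longrightarrow> card (set xs \<inter> V2) \<ge> 4"
    and "\<not> (\<exists>u\<in>V2. (\<forall>y\<in>V2. \<not> E u y) \<and>
              (\<exists>xs. is_P5_in E V xs \<and> xs ! 0 = u \<and> xs ! 1 \<in> V1))"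
    and "v \<in> V2" and "card {u \<in> V1. E v u} \<ge> 2"
    and "w \<in> V1" and "E v w"
  shows "nbhd E w \<subseteq> component E V2 v"
proof
  fix u assume "u \<in> nbhd E w"
  hence wu: "E w u" by (simp add: nbhd_def)
  have G: "\<And>x y. E x y \<Longrightarrow> x \<in> V \<and> y \<in> V" "\<And>x y. E x y \<Longrightarrow> E y x" "\<And>x. \<not> E x x"
    using assms(1) unfolding simple_graph_def by blast+
  note B = bad[OF assms(9) assms(3)]
  obtain w' where w': "w' \<in> V1" "E v w'" "w' \<noteq> w"
  proof -
    have "\<not> {u \<in> V1. E v u} \<subseteq> {w}"
    proof
      assume "{u \<in> V1. E v u} \<subseteq> {w}"
      hence "card {u \<in> V1. E v u} \<le> card {w}" by (intro card_mono) auto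
      thus False using assms(12) by simp
    qed
    thus ?thesis using that by blast
  qed
  have uV: "u \<in> V" using G wu by blast
  have vV: "v \<in> V" "w \<in> V" "w' \<in> V" using G assms(14) w' by blast+
  show "u \<in> component E V2 v"
  proof (cases "u \<in> V1")
    case True
    obtain xs where xs: "is_P5_in E V xs" "u \<in> set xs" using assms(8) uV by blast
    obtain a b c d e where P: "xs = [a,b,c,d,e]" "distinct [a,b,c,d,e]" "set [a,b,c,d,e] \<subseteq> V"
      "E a b" "E b c" "E c d" "E d e" by (rule p5_list[OF xs(1)])
    have S: "E b a" "E c b" "E d c" "E e d" using G(2)[OF P(4)] G(2)[OF P(5)] G(2)[OF P(6)] G(2)[OF P(7)] by this+
    have oth: "\<And>z. z \<in> set [a,b,c,d,e] \<Longrightarrow> z \<noteq> u \<Longrightarrow> z \<notin> V1"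
      using B[OF P(2-7)] xs P True by blast
    have wn: "w \<notin> set [a,b,c,d,e]" using oth assms(13) G(3) wu by blast
    have vn: "v \<noteq> u" using True assms(3,11) by blast
    have uw: "u \<noteq> w" using G(3) wu by blast
    have wv: "w \<noteq> v" using assms(3,11,13) by blast
    have Ewv: "E w v" using G(2)[OF assms(14)] .
    have Euw: "E u w" using G(2)[OF wu] .
    show ?thesis
    proof -
      have "u = a \<or> u = b \<or> u = c \<or> u = d \<or> u = e" using xs P by simp
      moreover
      { assume "u = a" hence False
          using B[of w a b c d w u] P wn vV uw wu True assms(13) by simp }
      moreover
      { assume "u = b" hence False
          using B[of w b c d e w u] P wn vV uw wu True assms(13) by simp }
      moreover
      { assume "u = e" hence False
          using B[of w e d c b w u] P wn vV uw wu True assms(13) S by auto }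
      moreover
      { assume "u = d" hence False
          using B[of w d c b a w u] P wn vV uw wu True assms(13) S by auto }
      moreover
      { assume c: "u = c"
        have False
        proof (cases "v \<in> set [a,b,c,d,e]")
          case False
          then show False using B[of a b c w v w u] P wn vV uw wu True assms(13) c Ewv S wv Euw by auto
        next
          case vin: True
          have "v = a \<or> v = b \<or> v = d \<or> v = e" using vin vn c by auto
          moreover
          { assume "v = a" hence False
              using B[of w a b c d w u] P wn vV uw wu True assms(13) c Ewv by simp }
          moreover
          { assume "v = b" hence False
              using B[of w b c d e w u] P wn vV uw wu True assms(13) c Ewv by simp }
          moreover
          { assume "v = d" hence False
              using B[of w d c b a w u] P wn vV uw wu True assms(13) c Ewv S by auto }
          moreover
          { assume "v = e" hence False
              using B[of w e d c b w u] P wn vV uw wu True assms(13) c Ewv S by auto }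
          ultimately show False by blast
        qed }
      ultimately show ?thesis by blast
    qed
  next
    case False
    hence uV2: "u \<in> V2" using uV assms(2) by blast
    show ?thesis
    proof (rule ccontr)
      assume nc: "u \<notin> component E V2 v"
      have "v \<in> component E V2 v" by (simp add: component_def)
      hence uv: "u \<noteq> v" using nc by metis
      have nvu: "\<not> E v u"
      proof
        assume "E v u"
        hence "(v, u) \<in> {(a, b). a \<in> V2 \<and> b \<in> V2 \<and> E a b}" using uV2 assms(11) by simp
        hence "u \<in> component E V2 v" unfolding component_def by (simp add: r_into_rtrancl)
        thus False using nc by contradiction
      qed
      have nuv: "\<not> E u v" using nvu G(2)[of u v] by blast
      have Evw': "E w' v" using G(2)[OF w'(2)] .
      have nx: "\<And>x. E u x \<Longrightarrow> x \<in> V1"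
      proof -
        fix x assume ux: "E u x"
        show "x \<in> V1"
        proof (rule ccontr)
          assume xn: "x \<notin> V1"
          hence "x \<noteq> w" "x \<noteq> w'" using assms(13) w'(1) by metis+
          moreover have "x \<noteq> u" using G(3)[of u] ux by metis
          moreover have "x \<noteq> v" using ux nuv by metis
          moreover have "u \<noteq> w" "u \<noteq> w'" using False assms(13) w'(1) by metis+
          moreover have "x \<in> V" using G(1)[OF ux] by simp
          moreover have "w' \<noteq> v" using w' assms(3,11) by blast
          moreover have "w \<noteq> w'" using w' by blast
          moreover have "v \<noteq> w" using assms(3,11,13) by blast
          ultimately have D: "distinct [w',v,w,u,x]" using uv by auto
          have SS: "set [w',v,w,u,x] \<subseteq> V" using vV uV \<open>x \<in> V\<close> by simp
          show False
            using B[OF D SS Evw' assms(14) wu ux, of w w'] w' assms(13) by simp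
        qed
      qed
      hence iso: "\<forall>y\<in>V2. \<not> E u y" using assms(3) by blast
      obtain xs where xs: "is_P5_in E V xs" "u \<in> set xs" using assms(8) uV by blast
      obtain a b c d e where P: "xs = [a,b,c,d,e]" "distinct [a,b,c,d,e]" "set [a,b,c,d,e] \<subseteq> V"
        "E a b" "E b c" "E c d" "E d e" by (rule p5_list[OF xs(1)])
    have S: "E b a" "E c b" "E d c" "E e d" using G(2)[OF P(4)] G(2)[OF P(5)] G(2)[OF P(6)] G(2)[OF P(7)] by this+
      have "u = a \<or> u = b \<or> u = c \<or> u = d \<or> u = e" using xs P by simp
      moreover
      { assume ua: "u = a"
        have "b \<in> V1" using nx P(4) ua by blast
        hence "u \<in> V2 \<and> (\<forall>y\<in>V2. \<not> E u y) \<and> (is_P5_in E V xs \<and> xs ! 0 = u \<and> xs ! 1 \<in> V1)"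
          using iso uV2 xs(1) P(1) ua by simp
        hence False using assms(10) by blast }
      moreover
      { assume ue: "u = e"
        have "is_P5_in E V [e,d,c,b,a]" using P S by (intro p5_intro) auto
        moreover have "d \<in> V1" using nx S(4) ue by blast
        ultimately have "u \<in> V2 \<and> (\<forall>y\<in>V2. \<not> E u y) \<and> (is_P5_in E V [e,d,c,b,a] \<and> [e,d,c,b,a] ! 0 = u \<and> [e,d,c,b,a] ! 1 \<in> V1)"
          using iso uV2 ue by simp
        hence False using assms(10) by blast }
      moreover
      { assume ub: "u = b"
        have "a \<in> V1" "c \<in> V1" using nx S(1) P(5) ub by blast+
        hence False using B[OF P(2-7), of a c] P(2) by simp }
      moreover
      { assume ub: "u = c"
        have "b \<in> V1" "d \<in> V1" using nx S(2) P(6) ub by blast+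
        hence False using B[OF P(2-7), of b d] P(2) by simp }
      moreover
      { assume ub: "u = d"
        have "c \<in> V1" "e \<in> V1" using nx S(3) P(7) ub by blast+
        hence False using B[OF P(2-7), of c e] P(2) by simp }
      ultimately show False by blast
    qed
  qed
qed

end
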